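(* Let $\Omega\subset\mathbb{R}^n$ be a nonempty closed convex set and $f:\mathbb{R}^n\to\mathbb{R}$ differentiable over $\Omega$ such that (i) $f(\bm{x})\ge\underline{f}$ for all $\bm{x}\in\Omega$, (ii) $\|\nabla f(\bm{x})-\nabla f(\bm{y})\|_2\le L\|\bm{x}-\bm{y}\|_2$ for all $\bm{x},\bm{y}\in\Omega$ for some $L>0$, and (iii) the relaxation sequence $\{\omega_k\}\subset[0,\infty)$ satisfies $\sum_{k=0}^\infty\omega_k<\infty$. Suppose $\{\bm{x}_k\}$ is generated by either IGPM without line search or IGPM with line search (described in the context). Then every limit point $\bm{x}^*$ of $\{\bm{x}_k\}$ is a first-order optimal solution of $\min_{\bm{x}\in\Omega}f(\bm{x})$, i.e., $\bm{x}^*=\mathcal{P}_\Omega(\bm{x}^*-\beta\nabla f(\bm{x}^* ))$ (equivalently $-\nabla f(\bm{x}^* )\in\mathcal{N}(\bm{x}^*|\Omega)$).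
   Context: $\mathcal{P}_\Omega$ is Euclidean projection onto $\Omega$ and $\mathcal{N}(\bm{x}|\Omega)$ the normal cone. For $\bm{x}_k\in\Omega$ write $\bm{g}_k=\nabla f(\bm{x}_k)$, $\bm{v}_k=\bm{x}_k-\beta\bm{g}_k$ for a fixed $\beta>0$, and define $p(\bm{z};\bm{x}_k)=\tfrac12\|\bm{z}-\bm{v}_k\|_2^2+\delta_\Omega(\bm{z})$ ($\delta_\Omega$ the $0/+\infty$ indicator of $\Omega$), $\Delta p(\bm{z};\bm{x}_k)=p(\bm{x}_k;\bm{x}_k)-p(\bm{z};\bm{x}_k)$, and $q(\bm{u};\bm{x}_k)=-\tfrac12\|\bm{u}-\bm{v}_k\|_2^2-\delta_\Omega^*(\bm{u})+\tfrac12\|\bm{v}_k\|_2^2$ with $\delta^*_\Omega(\bm{u})=\sup_{\bm{x}\in\Omega}\langle\bm{x},\bm{u}\rangle$. An inexact projection at iteration $k$ is a point $\bm{z}_k\in\Omega$ with $\Delta p(\bm{z}_k;\bm{x}_k)\ge0$ together with some dual point $\bm{u}_k$ such that $\frac{p(\bm{x}_k;\bm{x}_k)-p(\bm{z}_k;\bm{x}_k)+\omega_k}{p(\bm{x}_k;\bm{x}_k)-q(\bm{u}_k;\bm{x}_k)+\omega_k}\ge\gamma$, where $0<\gamma<1$. IGPM without line search: $0<\beta\le1/L$, $\bm{x}_0\in\Omega$, and $\bm{x}_{k+1}=\bm{z}_k$ for all $k$. IGPM with line search: fix $0<\eta<1$, $0<\alpha\le1$, $\beta>0$, $0<\theta<1$,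 $\bm{x}_0\in\Omega$; set $\bm{d}_k=\bm{z}_k-\bm{x}_k$, let $\alpha_k$ be the largest value in $\{\theta^i\alpha: i=0,1,2,\dots\}$ with $f(\bm{x}_k+\alpha_k\bm{d}_k)\le f(\bm{x}_k)+\eta\alpha_k\bm{g}_k^T\bm{d}_k$, and set $\bm{x}_{k+1}=\bm{x}_k+\alpha_k\bm{d}_k$. The algorithms are considered as generating infinite sequences. *)

theory Defs
  imports "HOL-Analysis.Analysis"
begin

text \<open>Setting: the ambient space R^n is an arbitrary Euclidean space 'a.
  grad x is the gradient of f at x; v_k = x_k - beta g_k.\<close>

definition vpt :: "('a::euclidean_space \<Rightarrow> 'a) \<Rightarrow> real \<Rightarrow> 'a \<Rightarrow> 'a" where
  "vpt grad \<beta> x = x - \<beta> *\<^sub>R grad x"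

text \<open>p(z; x) for z in Omega (the indicator term is 0 there).\<close>
definition pfun :: "('a::euclidean_space \<Rightarrow> 'a) \<Rightarrow> real \<Rightarrow> 'a \<Rightarrow> 'a \<Rightarrow> real" where
  "pfun grad \<beta> x z = (1/2) * (norm (z - vpt grad \<beta> x))\<^sup>2"

text \<open>Support function of Omega, delta*_Omega(u) = sup_{y in Omega} <y,u>
  (used only where it is finite, i.e. the set is bounded above).\<close>
definition supp :: "'a::euclidean_space set \<Rightarrow> 'a \<Rightarrow> real" where
  "supp \<Omega> u = (SUP y\<in>\<Omega>. y \<bullet> u)"

definition qfun :: "'a::euclidean_space set \<Rightarrow> ('a \<Rightarrow> 'a) \<Rightarrow> real \<Rightarrow> 'a \<Rightarrow> 'a \<Rightarrow> real" where
  "qfun \<Omega> grad \<beta> x u =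
     - (1/2) * (norm (u - vpt grad \<beta> x))\<^sup>2 - supp \<Omega> u + (1/2) * (norm (vpt grad \<beta> x))\<^sup>2"

text \<open>Inexact projection at the point x with relaxation omega:
  z in Omega, Delta p(z;x) >= 0, and a dual point u (with finite support value)
  such that (p(x;x) - p(z;x) + omega) / (p(x;x) - q(u;x) + omega) >= gamma,
  written in cross-multiplied form.\<close>
definition inexact_proj ::
  "'a::euclidean_space set \<Rightarrow> ('a \<Rightarrow> 'a) \<Rightarrow> real \<Rightarrow> real \<Rightarrow> real \<Rightarrow> 'a \<Rightarrow> 'a \<Rightarrow> 'a \<Rightarrow> bool" where
  "inexact_proj \<Omega> grad \<beta> \<gamma> \<omega> x z u \<longleftrightarrow>
     z \<in> \<Omega> \<and>
     pfun grad \<beta> x x - pfun grad \<beta> x z \<ge> 0 \<and>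
     bdd_above ((\<lambda>y. y \<bullet> u) ` \<Omega>) \<and>
     pfun grad \<beta> x x - pfun grad \<beta> x z + \<omega>
       \<ge> \<gamma> * (pfun grad \<beta> x x - qfun \<Omega> grad \<beta> x u + \<omega>)"

definition IGPM_nols ::
  "'a::euclidean_space set \<Rightarrow> ('a \<Rightarrow> 'a) \<Rightarrow> real \<Rightarrow> real \<Rightarrow> real \<Rightarrow> (nat \<Rightarrow> real)
     \<Rightarrow> (nat \<Rightarrow> 'a) \<Rightarrow> (nat \<Rightarrow> 'a) \<Rightarrow> (nat \<Rightarrow> 'a) \<Rightarrow> bool" where
  "IGPM_nols \<Omega> grad L \<beta> \<gamma> \<omega> x z u \<longleftrightarrow>
     0 < \<beta> \<and> \<beta> \<le> 1 / L \<and> x 0 \<in> \<Omega> \<and>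
     (\<forall>k. inexact_proj \<Omega> grad \<beta> \<gamma> (\<omega> k) (x k) (z k) (u k) \<and> x (Suc k) = z k)"

definition armijo :: "('a::euclidean_space \<Rightarrow> real) \<Rightarrow> ('a \<Rightarrow> 'a) \<Rightarrow> real \<Rightarrow> 'a \<Rightarrow> 'a \<Rightarrow> real \<Rightarrow> bool" where
  "armijo f grad \<eta> x d a \<longleftrightarrow> f (x + a *\<^sub>R d) \<le> f x + \<eta> * a * (grad x \<bullet> d)"

text \<open>IGPM with line search: alpha_k = theta^i alpha with i the least index
  satisfying the Armijo condition (i.e. the largest such value).\<close>
definition IGPM_ls ::
  "('a::euclidean_space \<Rightarrow> real) \<Rightarrow> 'a set \<Rightarrow> ('a \<Rightarrow> 'a) \<Rightarrow> real \<Rightarrow> real \<Rightarrow> real \<Rightarrow> real \<Rightarrow> real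
     \<Rightarrow> (nat \<Rightarrow> real) \<Rightarrow> (nat \<Rightarrow> 'a) \<Rightarrow> (nat \<Rightarrow> 'a) \<Rightarrow> (nat \<Rightarrow> 'a) \<Rightarrow> (nat \<Rightarrow> real) \<Rightarrow> bool" where
  "IGPM_ls f \<Omega> grad \<eta> \<alpha> \<beta> \<theta> \<gamma> \<omega> x z u step \<longleftrightarrow>
     0 < \<eta> \<and> \<eta> < 1 \<and> 0 < \<alpha> \<and> \<alpha> \<le> 1 \<and> 0 < \<beta> \<and> 0 < \<theta> \<and> \<theta> < 1 \<and> x 0 \<in> \<Omega> \<and>
     (\<forall>k. inexact_proj \<Omega> grad \<beta> \<gamma> (\<omega> k) (x k) (z k) (u k) \<and>
          (\<exists>i. step k = \<theta> ^ i * \<alpha> \<and>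
               armijo f grad \<eta> (x k) (z k - x k) (\<theta> ^ i * \<alpha>) \<and>
               (\<forall>j<i. \<not> armijo f grad \<eta> (x k) (z k - x k) (\<theta> ^ j * \<alpha>))) \<and>
          x (Suc k) = x k + step k *\<^sub>R (z k - x k))"

end

theory Submission
  imports Defs
begin
lemma descent:
  fixes \<Omega> :: "'a::euclidean_space set" and f :: "'a \<Rightarrow> real"
  assumes cvx: "convex \<Omega>"
    and der: "\<forall>y\<in>\<Omega>. (f has_derivative (\<lambda>h. grad y \<bullet> h)) (at y)"
    and lip: "\<forall>y\<in>\<Omega>. \<forall>w\<in>\<Omega>. norm (grad y - grad w) \<le> L * norm (y - w)"
    and xy: "x \<in> \<Omega>" "y \<in> \<Omega>"
  shows "f y \<le> f x + grad x \<bullet> (y - x) + L / 2 * (norm (y - x))\<^sup>2"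
proof -
  define d where "d = y - x"
  define \<phi> where "\<phi> t = f (x + t *\<^sub>R d) - t * (grad x \<bullet> d) - L / 2 * t\<^sup>2 * (norm d)\<^sup>2" for t
  have "\<phi> 1 \<le> \<phi> 0"
  proof (rule DERIV_nonpos_imp_nonincreasing[where f=\<phi> and a=0 and b=1])
    fix t :: real assume t: "0 \<le> t" "t \<le> 1"
    define p where "p = x + t *\<^sub>R d"
    have pin: "p \<in> \<Omega>"
    proof -
      have "p = (1 - t) *\<^sub>R x + t *\<^sub>R y" by (simp add: p_def d_def algebra_simps)
      then show ?thesis using cvx xy t by (simp add: convex_alt)
    qed
    have d1: "((\<lambda>t. x + t *\<^sub>R d) has_derivative (\<lambda>s. s *\<^sub>R d)) (at t)"
      by (auto intro!: derivative_eq_intros)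
    have d2: "((\<lambda>t. f (x + t *\<^sub>R d)) has_derivative (\<lambda>s. grad p \<bullet> (s *\<^sub>R d))) (at t)"
      using has_derivative_compose[OF d1, of f "\<lambda>h. grad p \<bullet> h"] der pin unfolding p_def by auto
    have d3: "((\<lambda>t. f (x + t *\<^sub>R d)) has_real_derivative (grad p \<bullet> d)) (at t)"
      unfolding has_field_derivative_def
    proof -
      have "(\<lambda>s. grad p \<bullet> (s *\<^sub>R d)) = (*) (grad p \<bullet> d)" by (rule ext) simp
      then show "((\<lambda>t. f (x + t *\<^sub>R d)) has_derivative (*) (grad p \<bullet> d)) (at t)" using d2 by simp
    qed
    have D: "(\<phi> has_real_derivative (grad p \<bullet> d - grad x \<bullet> d - L / 2 * (2 * t) * (norm d)\<^sup>2)) (at t)"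
      unfolding \<phi>_def
      apply (rule DERIV_diff)+
        apply (rule d3)
       apply (rule derivative_eq_intros | simp)+
      done
    have "grad p \<bullet> d - grad x \<bullet> d = (grad p - grad x) \<bullet> d" by (simp add: inner_diff_left)
    also have "\<dots> \<le> norm (grad p - grad x) * norm d" by (rule norm_cauchy_schwarz)
    also have "\<dots> \<le> L * norm (p - x) * norm d"
      using lip pin xy by (intro mult_right_mono) auto
    also have "\<dots> = L * t * (norm d)\<^sup>2" using t by (simp add: p_def power2_eq_square)
    finally have "grad p \<bullet> d - grad x \<bullet> d - L / 2 * (2 * t) * (norm d)\<^sup>2 \<le> 0" by simp
    then show "\<exists>D. (\<phi> has_real_derivative D) (at t) \<and> D \<le> 0" using D by blast
  qed simp
  then show ?thesis unfolding \<phi>_def d_def by simp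
qed
lemma dp_eq: "pfun grad \<beta> x x - pfun grad \<beta> x z = - \<beta> * (grad x \<bullet> (z - x)) - 1/2 * (norm (z - x))\<^sup>2"
  unfolding pfun_def vpt_def power2_norm_eq_inner
  by (simp add: algebra_simps inner_commute)

lemma proj_bound:
  fixes \<Omega> :: "'a::euclidean_space set"
  assumes cl: "closed \<Omega>" and cvx: "convex \<Omega>" and ne: "\<Omega> \<noteq> {}" and xin: "x \<in> \<Omega>"
    and ip: "inexact_proj \<Omega> grad \<beta> \<gamma> \<omega> x z u" and om: "\<omega> \<ge> 0" and ga: "\<gamma> > 0"
  shows "\<gamma> * (1/2 * (norm (x - closest_point \<Omega> (vpt grad \<beta> x)))\<^sup>2)
     \<le> pfun grad \<beta> x x - pfun grad \<beta> x z + \<omega>"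
proof -
  define v where "v = vpt grad \<beta> x"
  define P where "P = closest_point \<Omega> v"
  have Pin: "P \<in> \<Omega>" unfolding P_def using closest_point_in_set[OF cl ne] .
  have bdd: "bdd_above ((\<lambda>y. y \<bullet> u) ` \<Omega>)" and ineq:
    "pfun grad \<beta> x x - pfun grad \<beta> x z + \<omega> \<ge> \<gamma> * (pfun grad \<beta> x x - qfun \<Omega> grad \<beta> x u + \<omega>)"
    using ip unfolding inexact_proj_def by auto
  have "P \<bullet> u \<le> supp \<Omega> u" unfolding supp_def using bdd Pin by (rule cSUP_upper2) simp
  moreover have "0 \<le> (norm (P + u - v))\<^sup>2" by simp
  moreover have "(norm (P + u - v))\<^sup>2 = (norm (P - v))\<^sup>2 + (norm (u - v))\<^sup>2 + 2 * (P \<bullet> u) - (norm v)\<^sup>2"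
    unfolding power2_norm_eq_inner by (simp add: algebra_simps inner_commute)
  ultimately have q: "qfun \<Omega> grad \<beta> x u \<le> pfun grad \<beta> x P"
    unfolding qfun_def pfun_def v_def[symmetric] by linarith
  have dot: "(v - P) \<bullet> (x - P) \<le> 0"
    unfolding P_def by (rule any_closest_point_dot[OF cvx cl closest_point_in_set[OF cl ne] xin closest_point_exists(2)[OF cl ne]])
  have "(norm (x - v))\<^sup>2 = (norm (x - P))\<^sup>2 + (norm (P - v))\<^sup>2 - 2 * ((v - P) \<bullet> (x - P))"
    unfolding power2_norm_eq_inner by (simp add: algebra_simps inner_commute)
  then have b: "pfun grad \<beta> x x - pfun grad \<beta> x P \<ge> 1/2 * (norm (x - P))\<^sup>2"
    unfolding pfun_def v_def[symmetric] using dot by linarith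
  have "1/2 * (norm (x - P))\<^sup>2 \<le> pfun grad \<beta> x x - qfun \<Omega> grad \<beta> x u + \<omega>"
    using q b om by linarith
  then have "\<gamma> * (1/2 * (norm (x - P))\<^sup>2) \<le> \<gamma> * (pfun grad \<beta> x x - qfun \<Omega> grad \<beta> x u + \<omega>)"
    using ga by (intro mult_left_mono) auto
  then show ?thesis using ineq unfolding P_def v_def by linarith
qed


lemma nols_decrease:
  fixes \<Omega> :: "'a::euclidean_space set" and f :: "'a \<Rightarrow> real"
  assumes cvx: "convex \<Omega>"
    and der: "\<forall>y\<in>\<Omega>. (f has_derivative (\<lambda>h. grad y \<bullet> h)) (at y)"
    and lip: "\<forall>y\<in>\<Omega>. \<forall>w\<in>\<Omega>. norm (grad y - grad w) \<le> L * norm (y - w)"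
    and xz: "x \<in> \<Omega>" "z \<in> \<Omega>" and b: "0 < \<beta>" "\<beta> \<le> 1 / L" and L: "L > 0"
  shows "(1/\<beta>) * (pfun grad \<beta> x x - pfun grad \<beta> x z) \<le> f x - f z"
proof -
  have D: "f z \<le> f x + grad x \<bullet> (z - x) + L / 2 * (norm (z - x))\<^sup>2"
    by (rule descent[OF cvx der lip xz])
  have "L * \<beta> \<le> 1" using b L by (simp add: field_simps)
  then have "L \<le> 1 / \<beta>" using b by (simp add: field_simps)
  then have "L / 2 * (norm (z - x))\<^sup>2 \<le> (1 / \<beta>) / 2 * (norm (z - x))\<^sup>2"
    by (intro mult_right_mono) auto
  moreover have "(1/\<beta>) * (pfun grad \<beta> x x - pfun grad \<beta> x z) = - (grad x \<bullet> (z - x)) - (1 / \<beta>) / 2 * (norm (z - x))\<^sup>2"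
    unfolding dp_eq using b by (simp add: field_simps)
  ultimately show ?thesis using D by linarith
qed

lemma ls_decrease:
  fixes \<Omega> :: "'a::euclidean_space set" and f :: "'a \<Rightarrow> real"
  assumes cvx: "convex \<Omega>"
    and der: "\<forall>y\<in>\<Omega>. (f has_derivative (\<lambda>h. grad y \<bullet> h)) (at y)"
    and lip: "\<forall>y\<in>\<Omega>. \<forall>w\<in>\<Omega>. norm (grad y - grad w) \<le> L * norm (y - w)"
    and xz: "x \<in> \<Omega>" "z \<in> \<Omega>" and b: "0 < \<beta>" and L: "L > 0"
    and par: "0 < \<eta>" "\<eta> < 1" "0 < \<alpha>" "\<alpha> \<le> 1" "0 < \<theta>" "\<theta> < 1"
    and dp0: "pfun grad \<beta> x x - pfun grad \<beta> x z \<ge> 0"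
    and arm: "armijo f grad \<eta> x (z - x) (\<theta> ^ i * \<alpha>)"
    and narm: "\<forall>j<i. \<not> armijo f grad \<eta> x (z - x) (\<theta> ^ j * \<alpha>)"
  shows "(\<eta> * min \<alpha> (\<theta> * (1 - \<eta>) / (L * \<beta>)) / \<beta>) * (pfun grad \<beta> x x - pfun grad \<beta> x z)
     \<le> f x - f (x + (\<theta> ^ i * \<alpha>) *\<^sub>R (z - x))"
proof -
  define d where "d = z - x"
  define Dp where "Dp = pfun grad \<beta> x x - pfun grad \<beta> x z"
  define N where "N = (norm d)\<^sup>2"
  define G where "G = grad x \<bullet> d"
  define s where "s = \<theta> ^ i * \<alpha>"
  define c where "c = min \<alpha> (\<theta> * (1 - \<eta>) / (L * \<beta>))"
  have N0: "N \<ge> 0" unfolding N_def by simp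
  have Dp0: "Dp \<ge> 0" using dp0 unfolding Dp_def .
  have DpG: "Dp = - \<beta> * G - 1/2 * N" unfolding Dp_def G_def N_def d_def by (rule dp_eq)
  have s0: "s > 0" unfolding s_def using par by simp
  have inO: "x + t *\<^sub>R d \<in> \<Omega>" if "0 \<le> t" "t \<le> 1" for t
  proof -
    have "x + t *\<^sub>R d = (1 - t) *\<^sub>R x + t *\<^sub>R z" by (simp add: d_def algebra_simps)
    then show ?thesis using cvx xz that by (simp add: convex_alt)
  qed
  have A: "f (x + s *\<^sub>R d) \<le> f x + \<eta> * s * G"
    using arm unfolding armijo_def s_def G_def d_def by simp
  have cs: "c * Dp \<le> s * Dp"
  proof (cases "Dp = 0")
    case True then show ?thesis by simp
  next
    case False
    then have Dpp: "Dp > 0" using Dp0 by simp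
    have "c \<le> s"
    proof (cases i)
      case 0 then show ?thesis unfolding c_def s_def by simp
    next
      case (Suc j)
      define t where "t = \<theta> ^ j * \<alpha>"
      have t0: "0 < t" "t \<le> 1" unfolding t_def using par
        by (auto intro!: mult_le_one power_le_one)
      have st: "s = \<theta> * t" unfolding s_def t_def Suc by simp
      have fail: "f (x + t *\<^sub>R d) > f x + \<eta> * t * G"
        using narm Suc unfolding armijo_def t_def G_def d_def by auto
      have "f (x + t *\<^sub>R d) \<le> f x + grad x \<bullet> ((x + t *\<^sub>R d) - x) + L / 2 * (norm ((x + t *\<^sub>R d) - x))\<^sup>2"
        by (rule descent[OF cvx der lip xz(1) inO[OF _ t0(2)]]) (use t0 in simp)
      also have "\<dots> = f x + t * G + L / 2 * t\<^sup>2 * N"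
        unfolding G_def N_def using t0 by (simp add: power_mult_distrib)
      finally have "\<eta> * t * G < t * G + L / 2 * t\<^sup>2 * N" using fail by linarith
      then have "t * ((1 - \<eta>) * (- G)) < t * (L / 2 * t * N)"
        by (simp add: algebra_simps power2_eq_square)
      then have i1: "(1 - \<eta>) * (- G) < L / 2 * t * N" using t0 mult_less_cancel_left_pos by blast
      have "(1 - \<eta>) / (L * \<beta>) \<le> t"
      proof (rule ccontr)
        assume "\<not> ?thesis"
        then have "L * \<beta> * t < 1 - \<eta>" using L b by (simp add: field_simps)
        then have h1: "L * \<beta> * t * N \<le> (1 - \<eta>) * N" using N0 by (intro mult_right_mono) auto
        have h2: "\<beta> * ((1 - \<eta>) * (- G)) < \<beta> * (L / 2 * t * N)" using i1 b mult_less_cancel_left_pos by blast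
        have h3: "\<beta> * ((1 - \<eta>) * (- G)) = (1 - \<eta>) * Dp + (1 - \<eta>) * N / 2"
        proof -
          have "\<beta> * ((1 - \<eta>) * (- G)) = (1 - \<eta>) * (\<beta> * (- G))" by (simp add: algebra_simps)
          also have "\<beta> * (- G) = Dp + N / 2" using DpG by simp
          finally show ?thesis by (simp add: algebra_simps)
        qed
        have h4: "\<beta> * (L / 2 * t * N) = L * \<beta> * t * N / 2" by simp
        have h5: "(1 - \<eta>) * Dp > 0" using Dpp par by simp
        show False using h1 h2 h3 h4 h5 by linarith
      qed
      then have "\<theta> * ((1 - \<eta>) / (L * \<beta>)) \<le> \<theta> * t" using par by (intro mult_left_mono) auto
      then show ?thesis unfolding c_def st by simp
    qed
    then show ?thesis using Dp0 by (intro mult_right_mono)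
  qed
  have "\<beta> * (- G) \<ge> Dp" using DpG N0 by simp
  then have "- G \<ge> Dp / \<beta>" using b by (simp add: field_simps)
  then have "\<eta> * s * (Dp / \<beta>) \<le> \<eta> * s * (- G)" using par s0 by (intro mult_left_mono) auto
  moreover have "\<eta> * (c * Dp) / \<beta> \<le> \<eta> * (s * Dp) / \<beta>" using cs par b
    by (intro divide_right_mono mult_left_mono) auto
  ultimately have "\<eta> * c / \<beta> * Dp \<le> f x - f (x + s *\<^sub>R d)" using A by (simp add: algebra_simps)
  then show ?thesis unfolding c_def Dp_def s_def d_def .
qed


theorem theorem3p4:
  fixes \<Omega> :: "'a::euclidean_space set"
    and f :: "'a \<Rightarrow> real" and grad :: "'a \<Rightarrow> 'a"
    and flow L \<beta> \<gamma> \<eta> \<alpha> \<theta> :: real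
    and \<omega> :: "nat \<Rightarrow> real" and step :: "nat \<Rightarrow> real"
    and x z u :: "nat \<Rightarrow> 'a" and xstar :: 'a
  assumes "\<Omega> \<noteq> {}" and "closed \<Omega>" and "convex \<Omega>"
    and "\<forall>y\<in>\<Omega>. (f has_derivative (\<lambda>h. grad y \<bullet> h)) (at y)"
    and "\<forall>y\<in>\<Omega>. f y \<ge> flow"
    and "L > 0"
    and "\<forall>y\<in>\<Omega>. \<forall>w\<in>\<Omega>. norm (grad y - grad w) \<le> L * norm (y - w)"
    and "\<forall>k. \<omega> k \<ge> 0" and "summable \<omega>"
    and "0 < \<gamma>" and "\<gamma> < 1"
    and "IGPM_nols \<Omega> grad L \<beta> \<gamma> \<omega> x z u \<or> IGPM_ls f \<Omega> grad \<eta> \<alpha> \<beta> \<theta> \<gamma> \<omega> x z u step"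
    and "\<exists>r. strict_mono r \<and> (x \<circ> r) \<longlonglongrightarrow> xstar"
  shows "xstar = closest_point \<Omega> (xstar - \<beta> *\<^sub>R grad xstar)"
proof -
  note ne = assms(1) and cl = assms(2) and cvx = assms(3) and der = assms(4) and low = assms(5)
    and L = assms(6) and lip = assms(7) and om = assms(8) and oms = assms(9) and ga = assms(10)
  define Dp where "Dp k = pfun grad \<beta> (x k) (x k) - pfun grad \<beta> (x k) (z k)" for k
  define P where "P k = closest_point \<Omega> (vpt grad \<beta> (x k))" for k
  have b: "\<beta> > 0" and ip: "\<forall>k. inexact_proj \<Omega> grad \<beta> \<gamma> (\<omega> k) (x k) (z k) (u k)"
    using assms(12) unfolding IGPM_nols_def IGPM_ls_def by auto
  have zin: "z k \<in> \<Omega>" for k using ip unfolding inexact_proj_def by auto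
  have Dp0: "Dp k \<ge> 0" for k using ip unfolding inexact_proj_def Dp_def by auto
  have xin: "x k \<in> \<Omega>" for k
  proof (induction k)
    case 0 then show ?case using assms(12) unfolding IGPM_nols_def IGPM_ls_def by auto
  next
    case (Suc k)
    show ?case using assms(12)
    proof
      assume "IGPM_nols \<Omega> grad L \<beta> \<gamma> \<omega> x z u"
      then show ?thesis using zin unfolding IGPM_nols_def by auto
    next
      assume H: "IGPM_ls f \<Omega> grad \<eta> \<alpha> \<beta> \<theta> \<gamma> \<omega> x z u step"
      then obtain i where s: "step k = \<theta> ^ i * \<alpha>" and xs: "x (Suc k) = x k + step k *\<^sub>R (z k - x k)"
        unfolding IGPM_ls_def by blast
      have par: "0 < \<alpha>" "\<alpha> \<le> 1" "0 < \<theta>" "\<theta> < 1" using H unfolding IGPM_ls_def by auto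
      have "0 \<le> step k" "step k \<le> 1" unfolding s using par
        by (auto intro!: mult_le_one power_le_one)
      moreover have "x (Suc k) = (1 - step k) *\<^sub>R x k + step k *\<^sub>R z k" unfolding xs by (simp add: algebra_simps)
      ultimately show ?thesis using cvx Suc.IH zin[of k] by (simp add: convex_alt)
    qed
  qed
  have "\<exists>C>0. \<forall>k. C * Dp k \<le> f (x k) - f (x (Suc k))"
    using assms(12)
  proof
    assume H: "IGPM_nols \<Omega> grad L \<beta> \<gamma> \<omega> x z u"
    then have "\<beta> \<le> 1 / L" and xs: "\<And>k. x (Suc k) = z k" unfolding IGPM_nols_def by auto
    then have "\<forall>k. (1/\<beta>) * Dp k \<le> f (x k) - f (x (Suc k))"
      unfolding Dp_def using nols_decrease[OF cvx der lip xin zin b] L by auto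
    then show ?thesis using b by (intro exI[of _ "1/\<beta>"]) auto
  next
    assume H: "IGPM_ls f \<Omega> grad \<eta> \<alpha> \<beta> \<theta> \<gamma> \<omega> x z u step"
    have par: "0 < \<eta>" "\<eta> < 1" "0 < \<alpha>" "\<alpha> \<le> 1" "0 < \<theta>" "\<theta> < 1" using H unfolding IGPM_ls_def by auto
    define C where "C = \<eta> * min \<alpha> (\<theta> * (1 - \<eta>) / (L * \<beta>)) / \<beta>"
    have "C > 0" unfolding C_def using par b L by auto
    moreover have "C * Dp k \<le> f (x k) - f (x (Suc k))" for k
    proof -
      obtain i where s: "step k = \<theta> ^ i * \<alpha>" and a: "armijo f grad \<eta> (x k) (z k - x k) (\<theta> ^ i * \<alpha>)"
        and na: "\<forall>j<i. \<not> armijo f grad \<eta> (x k) (z k - x k) (\<theta> ^ j * \<alpha>)"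
        and xs: "x (Suc k) = x k + step k *\<^sub>R (z k - x k)"
        using H unfolding IGPM_ls_def by blast
      show ?thesis unfolding C_def Dp_def xs s
        by (rule ls_decrease[OF cvx der lip xin zin b L par _ a na]) (use Dp0 Dp_def in auto)
    qed
    ultimately show ?thesis by blast
  qed
  then obtain C where C: "C > 0" "\<And>k. C * Dp k \<le> f (x k) - f (x (Suc k))" by blast
  have "summable (\<lambda>k. C * Dp k)"
  proof (rule summableI_nonneg_bounded)
    show "0 \<le> C * Dp n" for n using C Dp0 by simp
    show "(\<Sum>i<n. C * Dp i) \<le> f (x 0) - flow" for n
    proof -
      have "(\<Sum>i<n. C * Dp i) \<le> (\<Sum>i<n. f (x i) - f (x (Suc i)))" by (rule sum_mono) (use C in auto)
      also have "\<dots> = f (x 0) - f (x n)" by (rule sum_lessThan_telescope')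
      also have "\<dots> \<le> f (x 0) - flow" using low xin by auto
      finally show ?thesis .
    qed
  qed
  then have "summable Dp" using C summable_mult_D[of C Dp] by auto
  then have Dp_lim: "Dp \<longlonglongrightarrow> 0" by (rule summable_LIMSEQ_zero)
  have om_lim: "\<omega> \<longlonglongrightarrow> 0" using oms by (rule summable_LIMSEQ_zero)
  define h where "h k = 2 * (Dp k + \<omega> k) / \<gamma>" for k
  have h_lim: "h \<longlonglongrightarrow> 0" unfolding h_def using Dp_lim om_lim ga
    by (auto intro!: tendsto_eq_intros)
  have hb: "(norm (x k - P k))\<^sup>2 \<le> h k" for k
  proof -
    have "\<gamma> * (1/2 * (norm (x k - P k))\<^sup>2) \<le> Dp k + \<omega> k"
      unfolding P_def Dp_def by (rule proj_bound[OF cl cvx ne xin ip[rule_format] om[rule_format] ga])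
    then show ?thesis unfolding h_def using ga by (simp add: field_simps)
  qed
  have e_lim: "(\<lambda>k. norm (x k - P k)) \<longlonglongrightarrow> 0"
  proof (rule tendsto_sandwich[of "\<lambda>_. 0" _ _ "\<lambda>k. sqrt (h k)"])
    show "\<forall>\<^sub>F n in sequentially. 0 \<le> norm (x n - P n)" by simp
    show "\<forall>\<^sub>F n in sequentially. norm (x n - P n) \<le> sqrt (h n)"
      using hb by (intro always_eventually allI real_le_rsqrt) auto
    show "(\<lambda>n. 0) \<longlonglongrightarrow> (0::real)" by simp
    show "(\<lambda>n. sqrt (h n)) \<longlonglongrightarrow> 0" using tendsto_real_sqrt[OF h_lim] by simp
  qed
  then have d_lim: "(\<lambda>k. x k - P k) \<longlonglongrightarrow> 0" by (simp add: tendsto_norm_zero_iff)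
  obtain r where r: "strict_mono r" "(x \<circ> r) \<longlonglongrightarrow> xstar" using assms(13) by blast
  have xsin: "xstar \<in> \<Omega>" using closed_sequentially[OF cl _ r(2)] xin by auto
  have gcont: "continuous_on \<Omega> grad"
  proof (rule lipschitz_on_continuous_on)
    show "L-lipschitz_on \<Omega> grad" using lip L unfolding lipschitz_on_def by (auto simp: dist_norm)
  qed
  have g_lim: "(\<lambda>k. grad (x (r k))) \<longlonglongrightarrow> grad xstar"
    using continuous_on_tendsto_compose[OF gcont r(2)[unfolded comp_def] xsin] xin by auto
  have v_lim: "(\<lambda>k. vpt grad \<beta> (x (r k))) \<longlonglongrightarrow> xstar - \<beta> *\<^sub>R grad xstar"
    unfolding vpt_def using r(2)[unfolded comp_def] g_lim by (auto intro!: tendsto_eq_intros)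
  have P_lim: "(\<lambda>k. P (r k)) \<longlonglongrightarrow> closest_point \<Omega> (xstar - \<beta> *\<^sub>R grad xstar)"
    unfolding P_def
    by (rule continuous_on_tendsto_compose[OF continuous_on_closest_point[OF cvx cl ne, where t=UNIV] v_lim]) auto
  have l1: "(\<lambda>k. x (r k) - P (r k)) \<longlonglongrightarrow> xstar - closest_point \<Omega> (xstar - \<beta> *\<^sub>R grad xstar)"
    using r(2)[unfolded comp_def] P_lim by (intro tendsto_diff)
  have l2: "(\<lambda>k. x (r k) - P (r k)) \<longlonglongrightarrow> 0"
    using LIMSEQ_subseq_LIMSEQ[OF d_lim r(1)] by (simp add: comp_def)
  show ?thesis using LIMSEQ_unique[OF l1 l2] by simp
qed

end
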